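(* Let $L$ be a sublattice of $A_n$ of rank $n$ and $D\in\mathbb Z^{n+1}$. (i) $r(D)=-1$ if and only if $-D\in\Sigma(L)$. (ii) $r(D)=\min\{\|p+D\|_{\ell_1}: p\in\Sigma(L)\}-1$, where $\|x\|_{\ell_1}=\sum_i|x_i|$.
   Context: Let $n\ge 1$, $H_0=\{x\in\mathbb R^{n+1}:\sum_i x_i=0\}$ and $A_n=H_0\cap\mathbb Z^{n+1}$. For $x\in\mathbb R^{n+1}$, $\deg(x)=\sum_i x_i$. Write $x\le y$ iff $x_i\le y_i$ for all $i$. For a sublattice $L\subseteq A_n$ of rank $n$ and $D\in\mathbb Z^{n+1}$: $|D|=\{E\in\mathbb Z^{n+1}:E\ge 0,\ D-E\in L\}$; $r(D)=-1$ if $|D|=\emptyset$, and otherwise $r(D)=\min\{\deg(E):E\in\mathbb Z^{n+1},E\ge0,|D-E|=\emptyset\}-1$. The Sigma-Region is $\Sigma(L)=\{D\in\mathbb Z^{n+1}: D\not\le p \text{ for all } p\in L\}$. *)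

theory Defs
  imports "HOL-Analysis.Analysis"
begin

text \<open>Vectors of Z^(n+1) are modelled as int^'n with CARD('n) = n+1.\<close>

definition vdeg :: "int^'n \<Rightarrow> int" where
  "vdeg x = (\<Sum>i\<in>UNIV. x $ i)"

definition vle :: "int^'n \<Rightarrow> int^'n \<Rightarrow> bool" where
  "vle x y \<longleftrightarrow> (\<forall>i. x $ i \<le> y $ i)"

definition A_lat :: "(int^'n) set" where
  "A_lat = {x. vdeg x = 0}"

definition is_sublattice :: "(int^'n) set \<Rightarrow> bool" where
  "is_sublattice L \<longleftrightarrow> 0 \<in> L \<and> (\<forall>x\<in>L. \<forall>y\<in>L. x + y \<in> L \<and> x - y \<in> L)"

definition to_real_vec :: "int^'n \<Rightarrow> real^'n" where
  "to_real_vec x = (\<chi> i. real_of_int (x $ i))"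

definition lattice_rank :: "(int^'n) set \<Rightarrow> nat" where
  "lattice_rank L = dim (span (to_real_vec ` L))"

definition linsys :: "(int^'n) set \<Rightarrow> int^'n \<Rightarrow> (int^'n) set" where
  "linsys L D = {E. vle 0 E \<and> D - E \<in> L}"

definition rk :: "(int^'n) set \<Rightarrow> int^'n \<Rightarrow> int" where
  "rk L D = (if linsys L D = {} then -1
             else Inf {vdeg E | E. vle 0 E \<and> linsys L (D - E) = {}} - 1)"

definition Sigma_region :: "(int^'n) set \<Rightarrow> (int^'n) set" where
  "Sigma_region L = {D. \<forall>p\<in>L. \<not> vle D p}"

definition l1norm :: "int^'n \<Rightarrow> int" where
  "l1norm x = (\<Sum>i\<in>UNIV. \<bar>x $ i\<bar>)"

end

theory Submission
  imports Defs
begin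

lemma linsys_empty_iff:
  assumes "is_sublattice L"
  shows "linsys L X = {} \<longleftrightarrow> - X \<in> Sigma_region L"
proof
  assume h: "linsys L X = {}"
  show "- X \<in> Sigma_region L"
    unfolding Sigma_region_def
  proof (intro CollectI ballI notI)
    fix q assume q: "q \<in> L" and v: "vle (- X) q"
    have "0 - q \<in> L" using assms q unfolding is_sublattice_def by blast
    moreover have "X - (X + q) = 0 - q" by simp
    moreover have "vle 0 (X + q)" unfolding vle_def
    proof
      fix i
      have "(- X) $ i \<le> q $ i" using v unfolding vle_def by blast
      then show "0 $ i \<le> (X + q) $ i" by simp
    qed
    ultimately have "X + q \<in> linsys L X" unfolding linsys_def by auto
    with h show False by auto
  qed
next
  assume h: "- X \<in> Sigma_region L"
  show "linsys L X = {}"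
  proof (rule ccontr)
    assume "linsys L X \<noteq> {}"
    then obtain E where E: "vle 0 E" "X - E \<in> L" unfolding linsys_def by auto
    then have "0 - (X - E) \<in> L" using assms unfolding is_sublattice_def by blast
    moreover have "vle (- X) (0 - (X - E))" using E(1) unfolding vle_def by auto
    ultimately show False using h unfolding Sigma_region_def by auto
  qed
qed

lemma vdeg_nonneg: "vle 0 E \<Longrightarrow> vdeg E \<ge> 0"
  unfolding vdeg_def vle_def by (auto intro: sum_nonneg)

lemma l1norm_nonneg: "l1norm x \<ge> 0"
  unfolding l1norm_def by (auto intro: sum_nonneg)

theorem lemma2p1:
  fixes L :: "(int^'n) set" and D :: "int^'n"
  assumes "CARD('n) \<ge> 2"
    and "is_sublattice L" and "L \<subseteq> A_lat"
    and "lattice_rank L = CARD('n) - 1"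
  shows "(rk L D = -1 \<longleftrightarrow> - D \<in> Sigma_region L)
       \<and> rk L D = Inf {l1norm (p + D) | p. p \<in> Sigma_region L} - 1"
proof -
  note LE = linsys_empty_iff[OF assms(2)]
  define S1 where "S1 = {vdeg E | E. vle 0 E \<and> linsys L (D - E) = {}}"
  define S2 where "S2 = {l1norm (p + D) | p. p \<in> Sigma_region L}"
  have bdd1: "bdd_below S1" unfolding S1_def bdd_below_def
    using vdeg_nonneg by blast
  have bdd2: "bdd_below S2" unfolding S2_def bdd_below_def
    using l1norm_nonneg by blast
  define E0 :: "int^'n" where "E0 = (\<chi> i. \<bar>D $ i\<bar> + 1)"
  have E0: "vle 0 E0" unfolding E0_def vle_def by auto
  have "linsys L (D - E0) = {}"
  proof (rule ccontr)
    assume "linsys L (D - E0) \<noteq> {}"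
    then obtain F where F: "vle 0 F" "D - E0 - F \<in> L" unfolding linsys_def by auto
    then have "vdeg (D - E0 - F) = 0" using assms(3) unfolding A_lat_def by auto
    moreover have "vdeg (D - E0 - F) < (\<Sum>i\<in>(UNIV::'n set). (0::int))" unfolding vdeg_def
    proof (rule sum_strict_mono)
      show "(D - E0 - F) $ x < 0" for x using F(1) unfolding E0_def vle_def
        by (simp add: E0_def vle_def) (smt (verit) zero_index)
    qed auto
    ultimately show False by simp
  qed
  then have S1ne: "S1 \<noteq> {}" unfolding S1_def using E0 by blast
  have sub: "S1 \<subseteq> S2"
  proof
    fix x assume "x \<in> S1"
    then obtain E where E: "x = vdeg E" "vle 0 E" "linsys L (D - E) = {}"
      unfolding S1_def by auto
    have "E - D \<in> Sigma_region L" using LE[of "D - E"] E(3) by simp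
    moreover have "l1norm (E - D + D) = vdeg E"
      using E(2) unfolding l1norm_def vdeg_def vle_def by simp
    ultimately show "x \<in> S2" unfolding S2_def using E(1) by force
  qed
  have dom: "\<exists>a\<in>S1. a \<le> b" if bS: "b \<in> S2" for b
  proof -
    obtain p where p: "b = l1norm (p + D)" "p \<in> Sigma_region L"
      using bS unfolding S2_def by auto
    define E :: "int^'n" where "E = (\<chi> i. max (p $ i + D $ i) 0)"
    have E0: "vle 0 E" unfolding E_def vle_def by auto
    have "E - D \<in> Sigma_region L"
      unfolding Sigma_region_def
    proof (intro CollectI ballI notI)
      fix q assume q: "q \<in> L" and v: "vle (E - D) q"
      have "vle p q" unfolding vle_def
      proof
        fix i
        have "(E - D) $ i \<le> q $ i" using v unfolding vle_def by blast
        then show "p $ i \<le> q $ i" unfolding E_def by simp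
      qed
      then show False using p(2) q unfolding Sigma_region_def by auto
    qed
    then have "linsys L (D - E) = {}" using LE[of "D - E"] by simp
    then have "vdeg E \<in> S1" unfolding S1_def using E0 by auto
    moreover have "vdeg E \<le> b" unfolding p(1) vdeg_def l1norm_def E_def
      by (rule sum_mono) auto
    ultimately show ?thesis by blast
  qed
  have S2ne: "S2 \<noteq> {}" using S1ne sub by auto
  have eq: "Inf S1 = Inf S2"
    using cInf_superset_mono[OF S1ne bdd2 sub] cInf_mono[OF S2ne bdd1 dom] by simp
  show ?thesis
  proof (cases "linsys L D = {}")
    case True
    then have m: "- D \<in> Sigma_region L" using LE by simp
    have "Inf S2 = 0"
    proof (rule cInf_eq_minimum)
      show "0 \<in> S2" unfolding S2_def using m
        by (auto simp: l1norm_def intro!: exI[of _ "- D"])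
      show "0 \<le> x" if "x \<in> S2" for x using that l1norm_nonneg unfolding S2_def by auto
    qed
    then show ?thesis using True m unfolding rk_def S2_def by simp
  next
    case False
    then have m: "- D \<notin> Sigma_region L" using LE by simp
    have "1 \<le> Inf S1"
    proof (rule cInf_greatest[OF S1ne])
      fix x assume "x \<in> S1"
      then obtain E where E: "x = vdeg E" "vle 0 E" "linsys L (D - E) = {}"
        unfolding S1_def by auto
      have "E \<noteq> 0" using E(3) False by auto
      then obtain i where i: "E $ i \<noteq> 0" by (metis vec_eq_iff zero_index)
      have "E $ i \<le> vdeg E" unfolding vdeg_def
        using E(2) unfolding vle_def
        by (intro member_le_sum) auto
      then show "1 \<le> x" using i E(1,2) unfolding vle_def by (smt (verit) zero_index)
    qed
    then show ?thesis using False m eq unfolding rk_def S1_def S2_def by simp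
  qed
qed

end
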